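(* Let $F = \{f_1,\dots,f_N\}$ with $f_i(z) = a_i z + b_i$, $a_i,b_i\in\mathbb{Z}$ and $a_i > 0$ for all $i$. Let $z \in \mathbb{N}$, let $\alpha, \beta$ be reduced regular expressions, and let $\ell$ be a finite (possibly empty) sequence of literals. Then: (1) $I'(z, \ell \alpha^* \beta) \iff V(z, \ell) \land \big(I'(z, \ell \beta) \lor I'(P_\ell(z), \alpha)\big)$; (2) $I'(z, \ell \alpha^* ) \iff V(z, \ell) \land \big(I'(z, \ell) \lor I'(P_\ell(z), \alpha)\big)$; (3) $I'(z, \alpha^* \beta) \iff I'(z, \alpha) \lor I'(z, \beta)$; (4) $I'(z, \alpha^* ) \iff I'(z,\alpha)$.
   Context: Regular expressions are over the alphabet $\{1,\dots,N\}$ (literals), built with concatenation, union, Kleene star, $\epsilon$ and $\emptyset$; $L(E)$ is the language of $E$. For a word $s = e_1 \cdots e_K$ put $P_s = f_{e_K} \circ \dots \circ f_{e_1}$ (with $P_\epsilon$ the identity), viewed as the composition $(f_{e_1},\dots,f_{e_K})$; its orbit at $z$ is $\{z, f_{e_1}(z), (f_{e_2}\circ f_{e_1})(z),\dots,P_s(z)\}$. A regular expression is reduced if it contains no $\emptyset$ symbol and no union operation. $V(z,s)$ is the statement that every element of the orbit of $P_s$ at $z$ is nonnegative (i.e. $P_s$ is valid with respect to $z$). For $z\in\mathbb{N}$ and reduced $E$, $I'(z,E)$ is the statement: there exists $s \in L(E)$ with $V(z,s)$ and $P_s(z) > z$. *)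

theory Defs
  imports Main
begin

text \<open>Regular expressions over literals (natural numbers; the alphabet is {1..N}).\<close>
datatype rexp = Lit nat | Eps | Empty | Conc rexp rexp | Union rexp rexp | Star rexp

fun lang :: "rexp \<Rightarrow> nat list set" where
  "lang (Lit i) = {[i]}"
| "lang Eps = {[]}"
| "lang Empty = {}"
| "lang (Conc r s) = {u @ v | u v. u \<in> lang r \<and> v \<in> lang s}"
| "lang (Union r s) = lang r \<union> lang s"
| "lang (Star r) = {concat ws | ws. \<forall>w\<in>set ws. w \<in> lang r}"

fun lits :: "rexp \<Rightarrow> nat set" where
  "lits (Lit i) = {i}"
| "lits Eps = {}"
| "lits Empty = {}"
| "lits (Conc r s) = lits r \<union> lits s"
| "lits (Union r s) = lits r \<union> lits s"
| "lits (Star r) = lits r"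

fun reduced :: "rexp \<Rightarrow> bool" where
  "reduced (Lit i) = True"
| "reduced Eps = True"
| "reduced Empty = False"
| "reduced (Conc r s) = (reduced r \<and> reduced s)"
| "reduced (Union r s) = False"
| "reduced (Star r) = reduced r"

fun word_rexp :: "nat list \<Rightarrow> rexp" where
  "word_rexp [] = Eps"
| "word_rexp [x] = Lit x"
| "word_rexp (x # xs) = Conc (Lit x) (word_rexp xs)"

definition fmap :: "(nat \<Rightarrow> int) \<Rightarrow> (nat \<Rightarrow> int) \<Rightarrow> nat \<Rightarrow> int \<Rightarrow> int" where
  "fmap a b i z = a i * z + b i"

text \<open>P_s = f_{e_K} o ... o f_{e_1} for s = e_1 ... e_K.\<close>
definition Pw :: "(nat \<Rightarrow> int) \<Rightarrow> (nat \<Rightarrow> int) \<Rightarrow> nat list \<Rightarrow> int \<Rightarrow> int" where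
  "Pw a b s z = fold (fmap a b) s z"

definition orbit :: "(nat \<Rightarrow> int) \<Rightarrow> (nat \<Rightarrow> int) \<Rightarrow> nat list \<Rightarrow> int \<Rightarrow> int set" where
  "orbit a b s z = {Pw a b (take k s) z | k. k \<le> length s}"

definition valid :: "(nat \<Rightarrow> int) \<Rightarrow> (nat \<Rightarrow> int) \<Rightarrow> int \<Rightarrow> nat list \<Rightarrow> bool" where
  "valid a b z s = (\<forall>x \<in> orbit a b s z. 0 \<le> x)"

definition Iprime :: "(nat \<Rightarrow> int) \<Rightarrow> (nat \<Rightarrow> int) \<Rightarrow> int \<Rightarrow> rexp \<Rightarrow> bool" where
  "Iprime a b z E = (\<exists>s \<in> lang E. valid a b z s \<and> Pw a b s z > z)"

end

theory Submission
  imports Defs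
begin

lemma Pw_Nil[simp]: "Pw a b [] z = z" by (simp add: Pw_def)
lemma Pw_Cons[simp]: "Pw a b (c#s) z = Pw a b s (fmap a b c z)" by (simp add: Pw_def)
lemma Pw_append[simp]: "Pw a b (u@v) z = Pw a b v (Pw a b u z)" by (simp add: Pw_def)

lemma orbit_Nil: "orbit a b [] z = {z}" by (simp add: orbit_def)

lemma orbit_Cons: "orbit a b (c#s) z = insert z (orbit a b s (fmap a b c z))"
proof
  show "orbit a b (c#s) z \<subseteq> insert z (orbit a b s (fmap a b c z))"
  proof
    fix x assume "x \<in> orbit a b (c#s) z"
    then obtain k where k: "k \<le> Suc (length s)" "x = Pw a b (take k (c#s)) z"
      by (auto simp: orbit_def)
    show "x \<in> insert z (orbit a b s (fmap a b c z))"
    proof (cases k)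
      case 0 then show ?thesis using k by simp
    next
      case (Suc k') then show ?thesis using k by (auto simp: orbit_def)
    qed
  qed
next
  show "insert z (orbit a b s (fmap a b c z)) \<subseteq> orbit a b (c#s) z"
  proof
    fix x assume "x \<in> insert z (orbit a b s (fmap a b c z))"
    then show "x \<in> orbit a b (c#s) z"
    proof
      assume "x = z"
      have "z = Pw a b (take 0 (c#s)) z \<and> (0::nat) \<le> length (c#s)" by simp
      then show ?thesis using \<open>x = z\<close> unfolding orbit_def by blast
    next
      assume "x \<in> orbit a b s (fmap a b c z)"
      then obtain k where k: "k \<le> length s" "x = Pw a b (take k s) (fmap a b c z)"
        by (auto simp: orbit_def)
      then show ?thesis unfolding orbit_def
        by (intro CollectI exI[of _ "Suc k"]) simp
    qed
  qed
qed

lemma valid_Nil[simp]: "valid a b z [] \<longleftrightarrow> 0 \<le> z"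
  by (simp add: valid_def orbit_Nil)
lemma valid_Cons[simp]: "valid a b z (c#s) \<longleftrightarrow> 0 \<le> z \<and> valid a b (fmap a b c z) s"
  by (simp add: valid_def orbit_Cons)

lemma valid_hd: "valid a b z s \<Longrightarrow> 0 \<le> z"
  by (cases s) auto

lemma valid_append: "valid a b z (u@v) \<longleftrightarrow> valid a b z u \<and> valid a b (Pw a b u z) v"
  by (induction u arbitrary: z) (auto dest: valid_hd)

definition pos :: "(nat \<Rightarrow> int) \<Rightarrow> nat list \<Rightarrow> bool" where
  "pos a s = (\<forall>i\<in>set s. 0 < a i)"

lemma Pw_mono: "pos a s \<Longrightarrow> x \<le> y \<Longrightarrow> Pw a b s x \<le> Pw a b s y"
proof (induction s arbitrary: x y)
  case (Cons c s)
  have "fmap a b c x \<le> fmap a b c y" using Cons.prems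
    by (auto simp: fmap_def pos_def intro: mult_left_mono)
  then show ?case using Cons by (auto simp: pos_def)
qed simp

lemma Pw_smono: "pos a s \<Longrightarrow> x < y \<Longrightarrow> Pw a b s x < Pw a b s y"
proof (induction s arbitrary: x y)
  case (Cons c s)
  have "fmap a b c x < fmap a b c y" using Cons.prems
    by (auto simp: fmap_def pos_def intro: mult_strict_left_mono)
  then show ?case using Cons by (auto simp: pos_def)
qed simp

lemma valid_mono: "pos a s \<Longrightarrow> x \<le> y \<Longrightarrow> valid a b x s \<Longrightarrow> valid a b y s"
proof (induction s arbitrary: x y)
  case (Cons c s)
  have "fmap a b c x \<le> fmap a b c y" using Cons.prems
    by (auto simp: fmap_def pos_def intro: mult_left_mono)
  then show ?case using Cons by (auto simp: pos_def)
qed simp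

lemma large: "pos a s \<Longrightarrow> \<exists>M. \<forall>x\<ge>M. valid a b x s \<and> Pw a b s x > t"
proof (induction s)
  case Nil
  show ?case by (rule exI[of _ "max 0 (t+1)"]) auto
next
  case (Cons c s)
  then obtain M' where M': "\<forall>x\<ge>M'. valid a b x s \<and> Pw a b s x > t"
    by (auto simp: pos_def)
  have ac: "a c \<ge> 1" using Cons.prems by (auto simp: pos_def)
  show ?case
  proof (rule exI[of _ "\<bar>M'\<bar> + \<bar>b c\<bar>"], intro allI impI)
    fix x assume x: "\<bar>M'\<bar> + \<bar>b c\<bar> \<le> x"
    have x0: "0 \<le> x" using x by (meson abs_ge_zero add_nonneg_nonneg order_trans)
    have "1 * x \<le> a c * x" using mult_right_mono[OF ac x0] .
    then have "x \<le> a c * x" by simp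
    then have "fmap a b c x \<ge> M'" using x by (simp add: fmap_def)
    then show "valid a b x (c#s) \<and> Pw a b (c#s) x > t" using M' x by auto
  qed
qed

lemma pump: "pos a w \<Longrightarrow> valid a b y w \<Longrightarrow> Pw a b w y > y \<Longrightarrow>
   valid a b y (concat (replicate n w)) \<and> Pw a b (concat (replicate n w)) y \<ge> y + int n"
proof (induction n arbitrary: y)
  case 0 then show ?case by (auto dest: valid_hd)
next
  case (Suc n)
  define y' where "y' = Pw a b w y"
  have "valid a b y' w" using valid_mono[OF Suc.prems(1) _ Suc.prems(2)] Suc.prems(3) unfolding y'_def by simp
  moreover have "Pw a b w y' > y'" using Suc.prems Pw_smono unfolding y'_def by blast
  ultimately have "valid a b y' (concat (replicate n w)) \<and> Pw a b (concat (replicate n w)) y' \<ge> y' + int n"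
    using Suc by blast
  then show ?case using Suc.prems by (simp add: valid_append y'_def[symmetric])
qed

lemma descent:
  assumes L: "\<forall>w\<in>set ws. w \<in> A" "\<forall>w\<in>A. pos a w"
  shows "x \<le> y \<Longrightarrow> valid a b x (concat ws) \<Longrightarrow>
     (\<exists>w\<in>A. valid a b y w \<and> Pw a b w y > y) \<or> Pw a b (concat ws) x \<le> y"
  using L(1)
proof (induction ws arbitrary: x)
  case Nil then show ?case by simp
next
  case (Cons w ws)
  have pw: "pos a w" "w \<in> A" using Cons.prems L(2) by auto
  have vw: "valid a b x w" and vr: "valid a b (Pw a b w x) (concat ws)"
    using Cons.prems by (auto simp: valid_append)
  show ?case
  proof (cases "Pw a b w x > y")
    case True
    have "valid a b y w" using valid_mono[OF pw(1) Cons.prems(1) vw] .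
    moreover have "Pw a b w y > y" using True Pw_mono[OF pw(1) Cons.prems(1), where b=b] by linarith
    ultimately show ?thesis using pw by blast
  next
    case False
    then show ?thesis using Cons.IH[of "Pw a b w x"] vr Cons.prems by auto
  qed
qed

lemma general:
  assumes LA: "\<forall>w\<in>A. pos a w" and pl: "pos a l" and PB: "\<forall>v\<in>B. pos a v" and Bne: "v0 \<in> B"
  shows "(\<exists>ws v. (\<forall>w\<in>set ws. w \<in> A) \<and> v \<in> B \<and> valid a b z (l @ concat ws @ v)
            \<and> Pw a b (l @ concat ws @ v) z > z) \<longleftrightarrow>
         valid a b z l \<and> ((\<exists>v\<in>B. valid a b z (l@v) \<and> Pw a b (l@v) z > z)
            \<or> (\<exists>w\<in>A. valid a b (Pw a b l z) w \<and> Pw a b w (Pw a b l z) > Pw a b l z))"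
  (is "?L \<longleftrightarrow> ?R")
proof
  assume ?L
  then obtain ws v where ws: "\<forall>w\<in>set ws. w \<in> A" and v: "v \<in> B"
    and val: "valid a b z (l @ concat ws @ v)" and gt: "Pw a b (l @ concat ws @ v) z > z" by blast
  define y where "y = Pw a b l z"
  have vl: "valid a b z l" and vc: "valid a b y (concat ws)"
    and vv: "valid a b (Pw a b (concat ws) y) v" using val by (auto simp: valid_append y_def)
  from descent[OF ws LA order_refl vc]
  show ?R
  proof
    assume "\<exists>w\<in>A. valid a b y w \<and> Pw a b w y > y"
    then show ?R using vl y_def by blast
  next
    assume le: "Pw a b (concat ws) y \<le> y"
    have "valid a b y v" using valid_mono[OF _ le vv] PB v by blast
    moreover have "Pw a b v y > z" using Pw_mono[where s=v and b=b and a=a, OF _ le] PB v gt by (simp add: y_def)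
    ultimately show ?R using vl v by (auto simp: valid_append y_def)
  qed
next
  assume R: ?R
  then have vl: "valid a b z l" by blast
  define y where "y = Pw a b l z"
  from R show ?L
  proof (elim conjE disjE)
    assume "\<exists>v\<in>B. valid a b z (l@v) \<and> Pw a b (l@v) z > z"
    then obtain v where "v \<in> B" "valid a b z (l@v)" "Pw a b (l@v) z > z" by blast
    then show ?L by (intro exI[of _ "[]"] exI[of _ v]) auto
  next
    assume "\<exists>w\<in>A. valid a b (Pw a b l z) w \<and> Pw a b w (Pw a b l z) > Pw a b l z"
    then obtain w where w: "w \<in> A" "valid a b y w" "Pw a b w y > y" unfolding y_def by blast
    obtain M where M: "\<forall>x\<ge>M. valid a b x v0 \<and> Pw a b v0 x > z"
      using large PB Bne by blast
    define n where "n = nat (M - y)"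
    have p: "valid a b y (concat (replicate n w)) \<and> Pw a b (concat (replicate n w)) y \<ge> y + int n"
      using pump[OF _ w(2,3)] LA w(1) by blast
    have "Pw a b (concat (replicate n w)) y \<ge> M" using p unfolding n_def by linarith
    then have "valid a b (Pw a b (concat (replicate n w)) y) v0 \<and> Pw a b v0 (Pw a b (concat (replicate n w)) y) > z"
      using M by blast
    then show ?L using p vl w(1) Bne
      by (intro exI[of _ "replicate n w"] exI[of _ v0]) (auto simp: valid_append y_def)
  qed
qed

lemma lang_word[simp]: "lang (word_rexp l) = {l}"
  by (induction l rule: word_rexp.induct) auto

lemma lang_lits: "s \<in> lang E \<Longrightarrow> set s \<subseteq> lits E"
  by (induction E arbitrary: s) fastforce+

lemma lang_ne: "reduced E \<Longrightarrow> \<exists>s. s \<in> lang E"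
proof (induction E)
  case (Star E) show ?case by (rule exI[of _ "[]"], simp, rule exI[of _ "[]"], simp)
qed fastforce+


lemma lang_conc_eps: "lang (Conc Eps X) = lang X" by auto

lemma lang1: "lang (Conc (word_rexp l) (Conc (Star \<alpha>) \<beta>)) = {l @ concat ws @ v | ws v. (\<forall>w\<in>set ws. w \<in> lang \<alpha>) \<and> v \<in> lang \<beta>}"
  by auto
lemma lang2: "lang (Conc (word_rexp l) (Star \<alpha>)) = {l @ concat ws @ v | ws v. (\<forall>w\<in>set ws. w \<in> lang \<alpha>) \<and> v \<in> {[]}}"
  by auto

lemma G1:
  assumes LA: "\<forall>w\<in>lang \<alpha>. pos a w" and pl: "pos a l" and PB: "\<forall>v\<in>lang \<beta>. pos a v" and Bne: "v0 \<in> lang \<beta>"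
  shows "Iprime a b z (Conc (word_rexp l) (Conc (Star \<alpha>) \<beta>)) \<longleftrightarrow>
           valid a b z l \<and> (Iprime a b z (Conc (word_rexp l) \<beta>) \<or> Iprime a b (Pw a b l z) \<alpha>)"
proof -
  have "Iprime a b z (Conc (word_rexp l) (Conc (Star \<alpha>) \<beta>)) \<longleftrightarrow>
    (\<exists>ws v. (\<forall>w\<in>set ws. w \<in> lang \<alpha>) \<and> v \<in> lang \<beta> \<and> valid a b z (l @ concat ws @ v)
            \<and> Pw a b (l @ concat ws @ v) z > z)"
    unfolding Iprime_def lang1 by blast
  also have "\<dots> \<longleftrightarrow> valid a b z l \<and> ((\<exists>v\<in>lang \<beta>. valid a b z (l@v) \<and> Pw a b (l@v) z > z)
            \<or> (\<exists>w\<in>lang \<alpha>. valid a b (Pw a b l z) w \<and> Pw a b w (Pw a b l z) > Pw a b l z))"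
    by (rule general[OF LA pl PB Bne])
  also have "\<dots> \<longleftrightarrow> valid a b z l \<and> (Iprime a b z (Conc (word_rexp l) \<beta>) \<or> Iprime a b (Pw a b l z) \<alpha>)"
    unfolding Iprime_def by (auto simp del: Pw_append)
  finally show ?thesis .
qed

lemma G2:
  assumes LA: "\<forall>w\<in>lang \<alpha>. pos a w" and pl: "pos a l"
  shows "Iprime a b z (Conc (word_rexp l) (Star \<alpha>)) \<longleftrightarrow>
           valid a b z l \<and> (Iprime a b z (word_rexp l) \<or> Iprime a b (Pw a b l z) \<alpha>)"
proof -
  have "Iprime a b z (Conc (word_rexp l) (Star \<alpha>)) \<longleftrightarrow>
    (\<exists>ws v. (\<forall>w\<in>set ws. w \<in> lang \<alpha>) \<and> v \<in> {[]} \<and> valid a b z (l @ concat ws @ v)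
            \<and> Pw a b (l @ concat ws @ v) z > z)"
    unfolding Iprime_def lang2 by blast
  also have "\<dots> \<longleftrightarrow> valid a b z l \<and> ((\<exists>v\<in>{[]}. valid a b z (l@v) \<and> Pw a b (l@v) z > z)
            \<or> (\<exists>w\<in>lang \<alpha>. valid a b (Pw a b l z) w \<and> Pw a b w (Pw a b l z) > Pw a b l z))"
    by (rule general[OF LA pl]) (auto simp: pos_def)
  also have "\<dots> \<longleftrightarrow> valid a b z l \<and> (Iprime a b z (word_rexp l) \<or> Iprime a b (Pw a b l z) \<alpha>)"
    unfolding Iprime_def by (auto simp del: Pw_append)
  finally show ?thesis .
qed

theorem mainTheorem13:
  fixes N :: nat and a b :: "nat \<Rightarrow> int" and z :: int
    and \<alpha> \<beta> :: rexp and l :: "nat list"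
  assumes apos: "\<forall>i \<in> {1..N}. a i > 0"
    and z: "0 \<le> z"
    and red\<alpha>: "reduced \<alpha>" and red\<beta>: "reduced \<beta>"
    and lits\<alpha>: "lits \<alpha> \<subseteq> {1..N}" and lits\<beta>: "lits \<beta> \<subseteq> {1..N}"
    and litsl: "set l \<subseteq> {1..N}"
  shows "(Iprime a b z (Conc (word_rexp l) (Conc (Star \<alpha>) \<beta>)) \<longleftrightarrow>
           valid a b z l \<and> (Iprime a b z (Conc (word_rexp l) \<beta>) \<or> Iprime a b (Pw a b l z) \<alpha>))
       \<and> (Iprime a b z (Conc (word_rexp l) (Star \<alpha>)) \<longleftrightarrow>
           valid a b z l \<and> (Iprime a b z (word_rexp l) \<or> Iprime a b (Pw a b l z) \<alpha>))
       \<and> (Iprime a b z (Conc (Star \<alpha>) \<beta>) \<longleftrightarrow> Iprime a b z \<alpha> \<or> Iprime a b z \<beta>)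
       \<and> (Iprime a b z (Star \<alpha>) \<longleftrightarrow> Iprime a b z \<alpha>)"
proof -
  have LA: "\<forall>w\<in>lang \<alpha>. pos a w" using lang_lits lits\<alpha> apos unfolding pos_def by blast
  have PB: "\<forall>v\<in>lang \<beta>. pos a v" using lang_lits lits\<beta> apos unfolding pos_def by blast
  have pl: "pos a l" using litsl apos unfolding pos_def by blast
  have pn: "pos a []" by (simp add: pos_def)
  obtain v0 where v0: "v0 \<in> lang \<beta>" using lang_ne[OF red\<beta>] by blast
  note g1 = G1[OF LA pl PB v0] and g2 = G2[OF LA pl]
  have ce: "\<And>X z. Iprime a b z (Conc Eps X) = Iprime a b z X"
    unfolding Iprime_def by (simp only: lang_conc_eps)
  have ne: "\<not> Iprime a b z Eps" by (simp add: Iprime_def)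
  have wE: "word_rexp [] = Eps" by simp
  have v0z: "valid a b z []" using z by simp
  have P0: "Pw a b [] z = z" by simp
  have g3: "Iprime a b z (Conc (Star \<alpha>) \<beta>) \<longleftrightarrow> Iprime a b z \<alpha> \<or> Iprime a b z \<beta>"
    using G1[OF LA pn PB v0, of b z] unfolding wE ce P0 using v0z by blast
  have g4: "Iprime a b z (Star \<alpha>) \<longleftrightarrow> Iprime a b z \<alpha>"
    using G2[OF LA pn, of b z] unfolding wE ce P0 using v0z ne by blast
  show ?thesis by (intro conjI g1 g2 g3 g4)
qed

end
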